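(* For every sequence ${\mathbf s}=(s_1,\dots,s_l)$ in $\widehat{\mathcal S}$ with $l\ge1$ the sum defining ${\mathcal X}_T({\mathbf s})$ is direct: ${\mathcal X}_T({\mathbf s})=\Delta({\mathcal X}_T({\mathbf s}'))\oplus c^{\alpha_l}\big(\Delta({\mathcal X}_T({\mathbf s}'))\big)$. In particular, for every sequence ${\mathbf s}$ of length $l$, ${\mathcal X}_T({\mathbf s})$ is a graded free $S_T$-module of graded rank $(1+v^2)^l$ (i.e. it has a homogeneous basis with $\binom lk$ elements of degree $2k$ for each $k$).
   Context: $R$ is an irreducible reduced finite root system with positive roots $R^+$, simple roots $\Pi$, highest root $\gamma$; $X$ its weight lattice, $\widehat X=X\oplus\mathbb Z$, $\delta=(0,-1)$, affine roots $\widehat R=\{\alpha+n\delta\}$. $\widehat{\mathcal W}$ is the affine Weyl group generated by $s_{\alpha,n}(v,m)=(v-(\langle\alpha,v\rangle-mn)\alpha^\vee,m)$ on $V^*\oplus\mathbb Q$, acting contragrediently on $\widehat X$; $\widehat{\mathcal S}=\{s_{\alpha,0}:\alpha\in\Pi\}\cup\{s_{\gamma,1}\}$; the simple affine root attached to $s_{\alpha,0}$ is $\alpha$ and to $s_{\gamma,1}$ is $-\gamma+\delta$. $T$ is a commutative unital domain in which $2$ is not a zero divisor and in which all $\alpha\otimes1\in\widehat X\otimes T$, $\alpha\in\widehat R$, are nonzero. $S_T$ is the symmetric algebra of $\widehat X\otimes T$, graded with $\widehat X\otimes T$ in degree $2$. For ${\mathbf s}=(s_1,\dots,s_l)$, $I({\mathbf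 s})$ is the set of tuples $(i_1<\dots<i_n)$, $0\le n\le l$, in $\{1,\dots,l\}$, and $\operatorname{ev}(i_1,\dots,i_n)=s_{i_1}\cdots s_{i_n}$. For $l\ge1$ let ${\mathbf s}'=(s_1,\dots,s_{l-1})$; regard $I({\mathbf s}')\subset I({\mathbf s})$ and write $\gamma s_l$ for $\gamma$ with $l$ appended, so $I({\mathbf s})=I({\mathbf s}')\sqcup I({\mathbf s}')s_l$. $\Delta\colon\bigoplus_{I({\mathbf s}')}S_T\to\bigoplus_{I({\mathbf s})}S_T$ is given by $\Delta(z)_\gamma=\Delta(z)_{\gamma s_l}=z_\gamma$. For $\lambda\in\widehat X$, $c^\lambda$ is the endomorphism of $\bigoplus_{\sigma\in I({\mathbf s})}S_T$ multiplying the $\sigma$-component by $\operatorname{ev}(\sigma)(\lambda)\otimes1$. $\alpha_l$ is the simple affine root of $s_l$. Define ${\mathcal X}_T(\emptyset)=S_T$ and ${\mathcal X}_T({\mathbf s})=\Delta({\mathcal X}_T({\mathbf s}'))+c^{\alpha_l}(\Delta({\mathcal X}_T({\mathbf s}')))\subset\bigoplus_{\sigma\in I({\mathbf s})}S_T$. *)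

theory Defs
  imports "HOL-Analysis.Analysis" "HOL-Library.Poly_Mapping"
begin

definition cp :: "'v::euclidean_space \<Rightarrow> 'v \<Rightarrow> real" where
  "cp lam a = 2 * (lam \<bullet> a) / (a \<bullet> a)"

definition refl :: "'v::euclidean_space \<Rightarrow> 'v \<Rightarrow> 'v" where
  "refl a lam = lam - cp lam a *\<^sub>R a"

definition root_system :: "'v::euclidean_space set \<Rightarrow> bool" where
  "root_system R \<longleftrightarrow> finite R \<and> 0 \<notin> R \<and> span R = UNIV
     \<and> (\<forall>a\<in>R. \<forall>b\<in>R. refl a b \<in> R)
     \<and> (\<forall>a\<in>R. \<forall>b\<in>R. cp b a \<in> \<int>)"

definition reduced_rs :: "'v::euclidean_space set \<Rightarrow> bool" where
  "reduced_rs R \<longleftrightarrow> (\<forall>a\<in>R. \<forall>c::real. c *\<^sub>R a \<in> R \<longrightarrow> c = 1 \<or> c = -1)"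

definition irreducible_rs :: "'v::euclidean_space set \<Rightarrow> bool" where
  "irreducible_rs R \<longleftrightarrow> \<not> (\<exists>A B. A \<noteq> {} \<and> B \<noteq> {} \<and> A \<union> B = R \<and> A \<inter> B = {}
        \<and> (\<forall>a\<in>A. \<forall>b\<in>B. a \<bullet> b = 0))"

definition is_base :: "'v::euclidean_space set \<Rightarrow> 'v set \<Rightarrow> bool" where
  "is_base R Sm \<longleftrightarrow> Sm \<subseteq> R \<and> independent Sm \<and>
     (\<forall>b\<in>R. \<exists>c::'v \<Rightarrow> int. b = (\<Sum>a\<in>Sm. of_int (c a) *\<^sub>R a) \<and>
        ((\<forall>a\<in>Sm. c a \<ge> 0) \<or> (\<forall>a\<in>Sm. c a \<le> 0)))"

definition highest_root :: "'v::euclidean_space set \<Rightarrow> 'v set \<Rightarrow> 'v \<Rightarrow> bool" where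
  "highest_root R Sm gam \<longleftrightarrow> gam \<in> R \<and>
     (\<forall>b\<in>R. \<exists>c::'v \<Rightarrow> nat. gam - b = (\<Sum>a\<in>Sm. of_nat (c a) *\<^sub>R a))"

definition weights :: "'v::euclidean_space set \<Rightarrow> 'v set" where
  "weights R = {lam. \<forall>a\<in>R. cp lam a \<in> \<int>}"

section \<open>Affine data: X^ = X (+) Z, elements (lam, k); delta = (0,-1)\<close>

text \<open>Labels of simple affine reflections: Some a means s_{a,0} (a simple),
  None means s_{gam,1}.\<close>
definition labels :: "'v set \<Rightarrow> 'v option set" where
  "labels Sm = insert None (Some ` Sm)"

text \<open>Contragredient action of s_{a,n} on X^:
  (lam,k) maps to (lam - <lam,a^vee> a, k - n <lam,a^vee>).\<close>
definition aff_refl :: "'v::euclidean_space \<Rightarrow> int \<Rightarrow> 'v \<times> int \<Rightarrow> 'v \<times> int" where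
  "aff_refl a n x = (refl a (fst x), snd x - n * \<lfloor>cp (fst x) a\<rfloor>)"

fun act :: "'v::euclidean_space \<Rightarrow> 'v option \<Rightarrow> 'v \<times> int \<Rightarrow> 'v \<times> int" where
  "act gam (Some a) = aff_refl a 0"
| "act gam None = aff_refl gam 1"

text \<open>Simple affine root: a for s_{a,0}; -gam + delta = (-gam, -1) for s_{gam,1}.\<close>
fun aroot :: "'v::euclidean_space \<Rightarrow> 'v option \<Rightarrow> 'v \<times> int" where
  "aroot gam (Some a) = (a, 0)"
| "aroot gam None = (- gam, -1)"

text \<open>Index tuples (i_1 < ... < i_n) in {1..l} are encoded as subsets of {0..<l}
  (0-based positions in the list s).  ev s sg = s_{i_1} ... s_{i_n}.\<close>
definition ev :: "'v::euclidean_space \<Rightarrow> 'v option list \<Rightarrow> nat set \<Rightarrow> 'v \<times> int \<Rightarrow> 'v \<times> int" where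
  "ev gam s sg = foldr (\<lambda>i. act gam (s ! i)) (sorted_list_of_set sg)"

section \<open>S_T = Sym(X^ (x) T), as polynomial ring over T in the coordinates
  w.r.t. the Z-basis (fundamental weights, (0,1)) of X^\<close>

type_synonym ('v, 'T) sym = "('v option \<Rightarrow>\<^sub>0 nat) \<Rightarrow>\<^sub>0 'T"

definition Var :: "'v option \<Rightarrow> ('v, 'T::comm_ring_1) sym" where
  "Var v = Poly_Mapping.single (Poly_Mapping.single v 1) 1"

definition SymAlg :: "'v set \<Rightarrow> ('v, 'T::comm_ring_1) sym set" where
  "SymAlg Sm = {p. \<forall>m\<in>Poly_Mapping.keys p. Poly_Mapping.keys m \<subseteq> labels Sm}"

text \<open>lam (x) 1 for lam = (mu, k) in X^: mu = sum_a <mu,a^vee> omega_a.\<close>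
definition tens :: "'v::euclidean_space set \<Rightarrow> 'v \<times> int \<Rightarrow> ('v, 'T::comm_ring_1) sym" where
  "tens Sm x = (\<Sum>a\<in>Sm. of_int \<lfloor>cp (fst x) a\<rfloor> * Var (Some a)) + of_int (snd x) * Var None"

text \<open>Homogeneous of degree d in the grading where X^ (x) T has degree 2.\<close>
definition homog :: "('v, 'T::comm_ring_1) sym \<Rightarrow> nat \<Rightarrow> bool" where
  "homog p d \<longleftrightarrow> (\<forall>m\<in>Poly_Mapping.keys p. 2 * (\<Sum>v\<in>Poly_Mapping.keys m. Poly_Mapping.lookup m v) = d)"

section \<open>The modules X_T(s) inside (+)_{sg in I(s)} S_T\<close>

type_synonym ('v, 'T) dsum = "nat set \<Rightarrow> ('v, 'T) sym"

definition addF :: "('v, 'T::comm_ring_1) dsum \<Rightarrow> ('v, 'T) dsum \<Rightarrow> ('v, 'T) dsum" where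
  "addF x y = (\<lambda>sg. x sg + y sg)"

text \<open>Delta for a sequence of length l: Delta(z)_gamma = Delta(z)_{gamma s_l} = z_gamma.\<close>
definition Delta :: "nat \<Rightarrow> ('v, 'T::comm_ring_1) dsum \<Rightarrow> ('v, 'T) dsum" where
  "Delta l z = (\<lambda>sg. if sg \<subseteq> {..<l} then z (sg - {l - 1}) else 0)"

definition cmul :: "'v::euclidean_space set \<Rightarrow> 'v \<Rightarrow> 'v option list \<Rightarrow> 'v \<times> int
     \<Rightarrow> ('v, 'T::comm_ring_1) dsum \<Rightarrow> ('v, 'T) dsum" where
  "cmul Sm gam s lam F = (\<lambda>sg. tens Sm (ev gam s sg lam) * F sg)"

primrec XT_rev :: "'v::euclidean_space set \<Rightarrow> 'v \<Rightarrow> 'v option list \<Rightarrow> ('v, 'T::comm_ring_1) dsum set" where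
  "XT_rev Sm gam [] = {F. \<exists>p\<in>SymAlg Sm. F = (\<lambda>sg. if sg = {} then p else 0)}"
| "XT_rev Sm gam (a # rs) =
     (let s = rev rs @ [a]; l = length s; M = XT_rev Sm gam rs in
       {addF x y | x y. x \<in> Delta l ` M \<and> y \<in> cmul Sm gam s (aroot gam a) ` (Delta l ` M)})"

definition XT :: "'v::euclidean_space set \<Rightarrow> 'v \<Rightarrow> 'v option list \<Rightarrow> ('v, 'T::comm_ring_1) dsum set" where
  "XT Sm gam s = XT_rev Sm gam (rev s)"

definition graded_free :: "'v set \<Rightarrow> ('v, 'T::comm_ring_1) dsum set \<Rightarrow> nat \<Rightarrow> bool" where
  "graded_free Sm M l \<longleftrightarrow> (\<exists>(N::nat) (b::nat \<Rightarrow> ('v, 'T) dsum) (dg::nat \<Rightarrow> nat).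
      (\<forall>j<N. b j \<in> M \<and> (\<forall>sg. homog (b j sg) (dg j)))
    \<and> (\<forall>d. card {j. j < N \<and> dg j = d} = (if even d then l choose (d div 2) else 0))
    \<and> (\<forall>x\<in>M. \<exists>!p::nat \<Rightarrow> ('v, 'T) sym. (\<forall>j. p j \<in> SymAlg Sm) \<and> (\<forall>j\<ge>N. p j = 0)
                 \<and> x = (\<lambda>sg. \<Sum>j<N. p j * b j sg)))"

end

theory Submission
  imports Defs
begin

lemma sl_insert_max:
  assumes "finite g" "\<forall>i\<in>g. i < k"
  shows "sorted_list_of_set (insert k g) = sorted_list_of_set g @ [k]"
proof -
  have "sorted_list_of_set (insert k g) = sorted_list_of_set g @ [k] \<longleftrightarrow>
        sorted_wrt (<) (sorted_list_of_set g @ [k]) \<and> set (sorted_list_of_set g @ [k]) = insert k g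
        \<and> length (sorted_list_of_set g @ [k]) = card (insert k g)"
    using sorted_list_of_set_unique[of "insert k g" "sorted_list_of_set g @ [k]"] assms by auto
  moreover have "sorted_wrt (<) (sorted_list_of_set g @ [k])"
    using assms by (auto simp: sorted_wrt_append)
  moreover have "card (insert k g) = Suc (card g)" using assms by auto
  ultimately show ?thesis using assms by auto
qed

lemma lookup_mult_pairs:
  "Poly_Mapping.lookup (f * g) k = (\<Sum>(a, b). Poly_Mapping.lookup f a * Poly_Mapping.lookup g b when k = a + b)"
  by transfer (simp add: prod_fun_unfold_prod)

definition lin :: "(('a \<Rightarrow>\<^sub>0 nat) \<Rightarrow>\<^sub>0 'T::comm_ring_1) \<Rightarrow> bool" where
  "lin p \<longleftrightarrow> (\<forall>m\<in>Poly_Mapping.keys p. \<exists>v. m = Poly_Mapping.single v 1)"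

lemma mult_lin_nz:
  fixes t w :: "('a \<Rightarrow>\<^sub>0 nat) \<Rightarrow>\<^sub>0 'T::idom"
  assumes "t \<noteq> 0" "lin t" "w \<noteq> 0"
  shows "t * w \<noteq> 0"
proof -
  have "Poly_Mapping.keys t \<noteq> {}" using assms(1) by simp
  then obtain m0 where m0: "m0 \<in> Poly_Mapping.keys t" by blast
  then obtain v0 where v0: "m0 = Poly_Mapping.single v0 1" using assms(2) unfolding lin_def by auto
  define phi where "phi = (\<lambda>m::'a \<Rightarrow>\<^sub>0 nat. Poly_Mapping.lookup m v0)"
  have phiadd: "phi (a + b) = phi a + phi b" for a b by (simp add: phi_def lookup_add)
  have W: "finite (Poly_Mapping.keys w)" "Poly_Mapping.keys w \<noteq> {}" using assms(3) by auto
  define M where "M = Max (phi ` Poly_Mapping.keys w)"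
  obtain b0 where b0: "b0 \<in> Poly_Mapping.keys w" "phi b0 = M"
  proof -
    have "M \<in> phi ` Poly_Mapping.keys w" unfolding M_def using W by (intro Max_in) auto
    then show ?thesis using that by blast
  qed
  have Mle: "phi b \<le> M" if "b \<in> Poly_Mapping.keys w" for b
    using W that unfolding M_def by auto
  have phim0: "phi m0 = 1" by (simp add: phi_def v0)
  define q where "q = m0 + b0"
  have uniq: "a = m0 \<and> b = b0" if "a \<in> Poly_Mapping.keys t" "b \<in> Poly_Mapping.keys w" "q = a + b" for a b
  proof -
    note ha = that
    obtain v where v: "a = Poly_Mapping.single v 1" using ha(1) assms(2) unfolding lin_def by auto
    have "phi q = 1 + M" using phim0 b0 phiadd q_def by simp
    moreover have "phi q = phi a + phi b" using ha phiadd by simp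
    moreover have "phi a \<le> 1" by (simp add: phi_def v lookup_single when_def)
    ultimately have "phi a = 1" using Mle[OF ha(2)] by linarith
    then have "v = v0" by (simp add: phi_def v lookup_single when_def split: if_splits)
    then have "a = m0" using v v0 by simp
    moreover then have "b = b0" using ha(3) q_def by simp
    ultimately show ?thesis by simp
  qed
  have "Poly_Mapping.lookup (t * w) q =
     (\<Sum>(a, b). Poly_Mapping.lookup t a * Poly_Mapping.lookup w b when q = a + b)"
    by (rule lookup_mult_pairs)
  also have "\<dots> = (\<Sum>ab. (case ab of (a, b) \<Rightarrow> Poly_Mapping.lookup t a * Poly_Mapping.lookup w b) when (m0, b0) = ab)"
  proof (rule Sum_any.cong)
    fix ab :: "('a \<Rightarrow>\<^sub>0 nat) \<times> ('a \<Rightarrow>\<^sub>0 nat)"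
    obtain a b where [simp]: "ab = (a, b)" by (cases ab)
    show "(case ab of (a, b) \<Rightarrow> Poly_Mapping.lookup t a * Poly_Mapping.lookup w b when q = a + b) =
          ((case ab of (a, b) \<Rightarrow> Poly_Mapping.lookup t a * Poly_Mapping.lookup w b) when (m0, b0) = ab)"
    proof (cases "Poly_Mapping.lookup t a = 0 \<or> Poly_Mapping.lookup w b = 0")
      case True then show ?thesis by (auto simp: when_def)
    next
      case False
      then have "a \<in> Poly_Mapping.keys t" "b \<in> Poly_Mapping.keys w" by (auto simp: in_keys_iff)
      then show ?thesis using uniq q_def by (auto simp: when_def)
    qed
  qed
  also have "\<dots> = Poly_Mapping.lookup t m0 * Poly_Mapping.lookup w b0"
    using Sum_any_when_equal'[of "\<lambda>ab. case ab of (a, b) \<Rightarrow> Poly_Mapping.lookup t a * Poly_Mapping.lookup w b" "(m0, b0)"] by simp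
  also have "\<dots> \<noteq> 0" using m0 b0 by (simp add: in_keys_iff)
  finally show ?thesis by auto
qed

lemma double_zero:
  fixes p :: "('a \<Rightarrow>\<^sub>0 nat) \<Rightarrow>\<^sub>0 'T::idom"
  assumes "\<forall>t::'T. 2 * t = 0 \<longrightarrow> t = 0" "p + p = 0"
  shows "p = 0"
proof -
  have "Poly_Mapping.lookup p k = 0" for k
  proof -
    have "Poly_Mapping.lookup p k + Poly_Mapping.lookup p k = 0"
      using lookup_add[of p p k] assms(2) by (simp only: lookup_zero)
    then have "2 * Poly_Mapping.lookup p k = 0" by (simp only: mult_2)
    then show ?thesis using assms(1) by blast
  qed
  then show ?thesis by (simp add: poly_mapping_eqI)
qed

definition negp :: "'v::euclidean_space \<times> int \<Rightarrow> 'v \<times> int" where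
  "negp x = (- fst x, - snd x)"

lemma cp_neg: "cp (- b) a = - cp b a"
  by (simp add: cp_def)

lemma refl_neg: "refl a (- b) = - refl a b"
  by (simp add: refl_def cp_neg algebra_simps)

lemma floor_neg_int: "r \<in> \<int> \<Longrightarrow> \<lfloor>- r\<rfloor> = - \<lfloor>r\<rfloor>"
  by (metis Ints_cases floor_of_int of_int_minus)

lemma cp_self: "(a::'v::euclidean_space) \<noteq> 0 \<Longrightarrow> cp a a = 2"
  by (simp add: cp_def)

lemma rs_refl: "root_system R \<Longrightarrow> a \<in> R \<Longrightarrow> b \<in> R \<Longrightarrow> refl a b \<in> R"
  by (simp add: root_system_def)

lemma rs_int: "root_system R \<Longrightarrow> a \<in> R \<Longrightarrow> b \<in> R \<Longrightarrow> cp b a \<in> \<int>"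
  by (simp add: root_system_def)

lemma rs_nz: "root_system R \<Longrightarrow> a \<in> R \<Longrightarrow> a \<noteq> 0"
  unfolding root_system_def by auto

lemma aff_refl_props:
  assumes "root_system R" "a \<in> R" "fst x \<in> R"
  shows "fst (aff_refl a n x) \<in> R \<and> aff_refl a n (negp x) = negp (aff_refl a n x)"
proof -
  have i: "cp (fst x) a \<in> \<int>" using assms rs_int by blast
  show ?thesis using assms
    by (simp add: aff_refl_def negp_def rs_refl refl_neg cp_neg floor_neg_int[OF i])
qed

lemma act_props:
  assumes "root_system R" "Sm \<subseteq> R" "gam \<in> R" "lab \<in> labels Sm" "fst x \<in> R"
  shows "fst (act gam lab x) \<in> R \<and> act gam lab (negp x) = negp (act gam lab x)"
proof (cases lab)
  case None
  then show ?thesis using aff_refl_props[OF assms(1,3,5)] by simp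
next
  case (Some a)
  then have "a \<in> R" using assms(2,4) by (auto simp: labels_def)
  then show ?thesis using aff_refl_props[OF assms(1) _ assms(5)] Some by simp
qed

lemma foldr_props:
  assumes "root_system R" "Sm \<subseteq> R" "gam \<in> R"
  shows "\<forall>i\<in>set L. s ! i \<in> labels Sm \<Longrightarrow> fst x \<in> R \<Longrightarrow>
    fst (foldr (\<lambda>i. act gam (s ! i)) L x) \<in> R \<and>
    foldr (\<lambda>i. act gam (s ! i)) L (negp x) = negp (foldr (\<lambda>i. act gam (s ! i)) L x)"
proof (induction L)
  case Nil then show ?case by simp
next
  case (Cons i L)
  then have h: "fst (foldr (\<lambda>i. act gam (s ! i)) L x) \<in> R \<and>
    foldr (\<lambda>i. act gam (s ! i)) L (negp x) = negp (foldr (\<lambda>i. act gam (s ! i)) L x)" by simp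
  have "s ! i \<in> labels Sm" using Cons by simp
  then show ?case using h act_props[OF assms, of "s ! i" "foldr (\<lambda>i. act gam (s ! i)) L x"] by simp
qed

lemma ev_props:
  assumes "root_system R" "Sm \<subseteq> R" "gam \<in> R" "set s \<subseteq> labels Sm"
    "finite g" "\<forall>i\<in>g. i < length s" "fst x \<in> R"
  shows "fst (ev gam s g x) \<in> R \<and> ev gam s g (negp x) = negp (ev gam s g x)"
proof -
  have "\<forall>i\<in>set (sorted_list_of_set g). s ! i \<in> labels Sm"
    using assms(4-6) by (auto simp: nth_mem subsetD)
  then show ?thesis unfolding ev_def using foldr_props[OF assms(1-3) _ assms(7)] by blast
qed

lemma ev_insert_last:
  assumes "finite g" "\<forall>i\<in>g. i < k"
  shows "ev gam s (insert k g) x = ev gam s g (act gam (s ! k) x)"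
  unfolding ev_def using sl_insert_max[OF assms] by simp

lemma aroot_props:
  assumes "root_system R" "Sm \<subseteq> R" "gam \<in> R" "lab \<in> labels Sm"
  shows "fst (aroot gam lab) \<in> R \<and> act gam lab (aroot gam lab) = negp (aroot gam lab)"
proof (cases lab)
  case None
  have nz: "gam \<noteq> 0" using rs_nz assms by blast
  have "refl gam gam = - gam" using cp_self[OF nz] by (simp add: refl_def algebra_simps scaleR_2)
  then have "- gam \<in> R" using rs_refl[OF assms(1,3,3)] by simp
  have c1: "cp (- gam) gam = -2" by (subst cp_neg) (simp add: cp_self[OF nz])
  have r1: "refl gam (- gam) = gam" by (subst refl_neg) (simp add: \<open>refl gam gam = - gam\<close>)
  have "act gam lab (aroot gam lab) = (refl gam (- gam), -1 - 1 * \<lfloor>cp (- gam) gam\<rfloor>)"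
    unfolding None by (simp only: act.simps aroot.simps aff_refl_def fst_conv snd_conv)
  also have "\<dots> = (gam, 1)" unfolding r1 c1 by simp
  finally have "act gam lab (aroot gam lab) = (gam, 1)" .
  moreover have "negp (aroot gam lab) = (gam, 1)" unfolding None by (simp add: negp_def)
  ultimately show ?thesis using \<open>- gam \<in> R\<close> None by simp
next
  case (Some a)
  then have a: "a \<in> R" using assms(2,4) by (auto simp: labels_def)
  then have nz: "a \<noteq> 0" using rs_nz assms by blast
  have ra: "refl a a = - a" using cp_self[OF nz] by (simp add: refl_def algebra_simps scaleR_2)
  have "act gam lab (aroot gam lab) = (refl a a, 0 - 0 * \<lfloor>cp a a\<rfloor>)"
    unfolding Some by (simp only: act.simps aroot.simps aff_refl_def fst_conv snd_conv)
  also have "\<dots> = (- a, 0)" unfolding ra by simp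
  finally have "act gam lab (aroot gam lab) = (- a, 0)" .
  moreover have "negp (aroot gam lab) = (- a, 0)" unfolding Some by (simp add: negp_def)
  ultimately show ?thesis using a Some by simp
qed

lemma tens_neg:
  assumes "root_system R" "Sm \<subseteq> R" "fst x \<in> R"
  shows "tens Sm (negp x) = - (tens Sm x :: ('v::euclidean_space, 'T::comm_ring_1) sym)"
proof -
  have "of_int \<lfloor>cp (- fst x) a\<rfloor> * (Var (Some a) :: ('v, 'T) sym) = - (of_int \<lfloor>cp (fst x) a\<rfloor> * Var (Some a))"
    if "a \<in> Sm" for a
  proof -
    have "cp (fst x) a \<in> \<int>" using rs_int assms that by blast
    then show ?thesis by (simp add: cp_neg floor_neg_int)
  qed
  then show ?thesis unfolding tens_def negp_def
    by (simp add: sum_negf[symmetric] algebra_simps cong: sum.cong)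
qed

lemma lin_add: assumes "lin p" "lin q" shows "lin (p + q)"
  unfolding lin_def
proof
  fix m assume "m \<in> Poly_Mapping.keys (p + q)"
  then have "m \<in> Poly_Mapping.keys p \<or> m \<in> Poly_Mapping.keys q" proof -
    have "m \<in> Poly_Mapping.keys p \<union> Poly_Mapping.keys q" using keys_add[of p q] \<open>m \<in> Poly_Mapping.keys (p + q)\<close> by (rule subsetD)
    then show ?thesis by (simp only: Un_iff)
  qed
  then show "\<exists>v. m = Poly_Mapping.single v 1" using assms unfolding lin_def by (elim disjE) simp_all
qed

lemma lin_zero: "lin 0" by (simp add: lin_def)

lemma lin_sum: "(\<And>a. a \<in> A \<Longrightarrow> lin (f a)) \<Longrightarrow> lin (sum f A)"
  by (induction A rule: infinite_finite_induct) (auto simp: lin_zero lin_add)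

lemma lin_cVar: "lin (of_int n * Var v)"
proof -
  have eq: "of_int n * Var v = Poly_Mapping.single (Poly_Mapping.single v 1) (of_int n)"
    unfolding Var_def by (simp add: mult_single flip: single_of_int)
  show ?thesis unfolding eq lin_def by auto
qed

lemma lin_tens: "lin (tens Sm x)"
  unfolding tens_def by (intro lin_add lin_sum lin_cVar)

definition mdeg :: "('v option \<Rightarrow>\<^sub>0 nat) \<Rightarrow> nat" where
  "mdeg m = (\<Sum>v\<in>Poly_Mapping.keys m. Poly_Mapping.lookup m v)"

lemma mdeg_sub: "finite A \<Longrightarrow> Poly_Mapping.keys m \<subseteq> A \<Longrightarrow> mdeg m = (\<Sum>v\<in>A. Poly_Mapping.lookup m v)"
  unfolding mdeg_def
proof (rule sum.mono_neutral_left)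
  show "\<forall>i\<in>A - Poly_Mapping.keys m. Poly_Mapping.lookup m i = 0" by (simp add: in_keys_iff)
qed

lemma mdeg_add: "mdeg (a + b) = mdeg a + mdeg b"
proof -
  let ?A = "Poly_Mapping.keys a \<union> Poly_Mapping.keys b"
  have f: "finite ?A" by simp
  have "mdeg (a + b) = (\<Sum>v\<in>?A. Poly_Mapping.lookup (a + b) v)"
    by (rule mdeg_sub[OF f]) (rule keys_add)
  also have "\<dots> = (\<Sum>v\<in>?A. Poly_Mapping.lookup a v) + (\<Sum>v\<in>?A. Poly_Mapping.lookup b v)"
    by (simp add: lookup_add sum.distrib)
  also have "\<dots> = mdeg a + mdeg b" using mdeg_sub[OF f, of a] mdeg_sub[OF f, of b] by simp
  finally show ?thesis .
qed

lemma homog_alt: "homog p d \<longleftrightarrow> (\<forall>m\<in>Poly_Mapping.keys p. 2 * mdeg m = d)"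
  by (simp add: homog_def mdeg_def)

lemma homog_mult:
  assumes "homog p d1" "homog q d2"
  shows "homog (p * q) (d1 + d2)"
  unfolding homog_alt
proof
  fix m assume "m \<in> Poly_Mapping.keys (p * q)"
  then obtain a b where "m = a + b" "a \<in> Poly_Mapping.keys p" "b \<in> Poly_Mapping.keys q"
    using keys_mult by blast
  then show "2 * mdeg m = d1 + d2" using assms by (simp add: homog_alt mdeg_add)
qed

lemma homog_zero: "homog 0 d" by (simp add: homog_def)

lemma homog_one: "homog 1 0" by (simp add: homog_def)

lemma homog_lin: "lin p \<Longrightarrow> homog p 2"
  unfolding lin_def homog_def by auto

lemma direct_comp:
  fixes y z y' z' :: "('v::euclidean_space, 'T::idom) dsum"
  assumes rs: "root_system R" "Sm \<subseteq> R" "gam \<in> R"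
    and two: "\<forall>t::'T. 2 * t = 0 \<longrightarrow> t = 0"
    and nz: "\<forall>a\<in>R. \<forall>k::int. tens Sm (a, k) \<noteq> (0::('v, 'T) sym)"
    and s: "set s \<subseteq> labels Sm" "s \<noteq> []"
    and eq: "addF (Delta (length s) y) (cmul Sm gam s (aroot gam (last s)) (Delta (length s) z))
           = addF (Delta (length s) y') (cmul Sm gam s (aroot gam (last s)) (Delta (length s) z'))"
    and g: "g \<subseteq> {..<length s - 1}"
  shows "y g = y' g \<and> z g = z' g"
proof -
  define l where "l = length s"
  define k where "k = l - 1"
  define \<alpha> where "\<alpha> = aroot gam (last s)"
  define x0 where "x0 = ev gam s g \<alpha>"
  define t where "t = (tens Sm x0 :: ('v, 'T) sym)"
  have l: "l = Suc k" using s(2) by (simp add: k_def l_def)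
  have fg: "finite g" using g finite_subset by blast
  have gk: "\<forall>i\<in>g. i < k" using g by (auto simp: k_def l_def)
  have gl: "\<forall>i\<in>g. i < length s" using gk l l_def by auto
  have lastin: "last s \<in> labels Sm" using s by auto
  have ar: "fst \<alpha> \<in> R \<and> act gam (last s) \<alpha> = negp \<alpha>"
    unfolding \<alpha>_def by (rule aroot_props[OF rs lastin])
  have evp: "fst x0 \<in> R \<and> ev gam s g (negp \<alpha>) = negp x0"
    unfolding x0_def using ev_props[OF rs s(1) fg gl] ar by blast
  have sk: "s ! k = last s" using s(2) by (simp add: k_def l_def last_conv_nth)
  have "ev gam s (insert k g) \<alpha> = ev gam s g (act gam (s ! k) \<alpha>)" by (rule ev_insert_last[OF fg gk])
  also have "\<dots> = ev gam s g (negp \<alpha>)" using sk ar by simp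
  also have "\<dots> = negp x0" using evp by simp
  finally have evk: "ev gam s (insert k g) \<alpha> = negp x0" .
  have tn: "tens Sm (negp x0) = - t" unfolding t_def using tens_neg[OF rs(1,2)] evp by blast
  have tnz: "t \<noteq> 0" unfolding t_def using nz evp by (metis prod.collapse)
  have tlin: "lin t" unfolding t_def by (rule lin_tens)
  have gsub: "g \<subseteq> {..<l}" "g - {k} = g" using gk l by auto
  have ksub: "insert k g \<subseteq> {..<l}" "insert k g - {k} = g" using gk l by auto
  have E1: "y g + t * z g = y' g + t * z' g"
  proof -
    have "addF (Delta l y) (cmul Sm gam s \<alpha> (Delta l z)) g = addF (Delta l y') (cmul Sm gam s \<alpha> (Delta l z')) g"
      using eq by (simp add: l_def \<alpha>_def)
    then show ?thesis using gsub by (simp add: addF_def Delta_def cmul_def t_def x0_def k_def)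
  qed
  have E2: "y g + (- t) * z g = y' g + (- t) * z' g"
  proof -
    have "addF (Delta l y) (cmul Sm gam s \<alpha> (Delta l z)) (insert k g) = addF (Delta l y') (cmul Sm gam s \<alpha> (Delta l z')) (insert k g)"
      using eq by (simp add: l_def \<alpha>_def)
    then have "y g + tens Sm (ev gam s (insert k g) \<alpha>) * z g = y' g + tens Sm (ev gam s (insert k g) \<alpha>) * z' g"
      using ksub by (simp add: addF_def Delta_def cmul_def k_def)
    then show ?thesis using evk tn by simp
  qed
  have "t * ((z g - z' g) + (z g - z' g)) = (y g + t * z g) - (y g + (- t) * z g) - ((y' g + t * z' g) - (y' g + (- t) * z' g))"
    by (simp add: algebra_simps)
  also have "\<dots> = 0" using E1 E2 by simp
  finally have "(z g - z' g) + (z g - z' g) = 0" using mult_lin_nz[OF tnz tlin] by blast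
  then have "z g - z' g = 0" using double_zero[OF two] by blast
  then have zz: "z g = z' g" by simp
  then have "y g = y' g" using E1 by simp
  then show ?thesis using zz by simp
qed

lemma direct_pairs:
  fixes y z y' z' :: "('v::euclidean_space, 'T::idom) dsum"
  assumes rs: "root_system R" "Sm \<subseteq> R" "gam \<in> R"
    and two: "\<forall>t::'T. 2 * t = 0 \<longrightarrow> t = 0"
    and nz: "\<forall>a\<in>R. \<forall>k::int. tens Sm (a, k) \<noteq> (0::('v, 'T) sym)"
    and s: "set s \<subseteq> labels Sm" "s \<noteq> []"
    and eq: "addF (Delta (length s) y) (cmul Sm gam s (aroot gam (last s)) (Delta (length s) z))
           = addF (Delta (length s) y') (cmul Sm gam s (aroot gam (last s)) (Delta (length s) z'))"
  shows "Delta (length s) y = Delta (length s) y' \<and>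
         cmul Sm gam s (aroot gam (last s)) (Delta (length s) z) = cmul Sm gam s (aroot gam (last s)) (Delta (length s) z')"
proof -
  have c: "y (sg - {length s - 1}) = y' (sg - {length s - 1}) \<and> z (sg - {length s - 1}) = z' (sg - {length s - 1})"
    if "sg \<subseteq> {..<length s}" for sg
  proof (rule direct_comp[OF rs two nz s eq])
    show "sg - {length s - 1} \<subseteq> {..<length s - 1}" using that by auto
  qed
  show ?thesis using c by (auto simp: Delta_def cmul_def fun_eq_iff)
qed

lemma sum_split_add: "(\<Sum>j<n + m. f j) = (\<Sum>j<n. f j) + (\<Sum>j<m. f (n + j))"
  for f :: "nat \<Rightarrow> 'a::comm_monoid_add"
  by (induction m) (simp_all add: add.assoc)

lemma ex1_same: "\<exists>!x. P x \<Longrightarrow> P a \<Longrightarrow> P b \<Longrightarrow> a = b" by blast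

lemma zero_SymAlg: "0 \<in> SymAlg Sm" by (simp add: SymAlg_def)

lemma one_SymAlg: "1 \<in> SymAlg Sm" by (simp add: SymAlg_def)

lemma zero_in_XT: "(\<lambda>_. 0) \<in> (XT_rev Sm gam rs :: ('v::euclidean_space, 'T::comm_ring_1) dsum set)"
proof (induction rs)
  case Nil
  have "(\<lambda>_. 0) = (\<lambda>sg. if sg = {} then (0::('v, 'T) sym) else 0)" by simp
  then show ?case using zero_SymAlg[of Sm] by (simp only: XT_rev.simps mem_Collect_eq) blast
next
  case (Cons a rs)
  let ?s = "rev rs @ [a]"
  have "(\<lambda>_. 0) = addF (Delta (length ?s) (\<lambda>_. 0)) (cmul Sm gam ?s (aroot gam a) (Delta (length ?s) (\<lambda>_. (0::('v, 'T) sym))))"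
    by (simp add: addF_def Delta_def cmul_def fun_eq_iff)
  then show ?case using Cons by (simp add: Let_def) blast
qed

lemma Delta_sum:
  "Delta l (\<lambda>sg. \<Sum>j<N. P j * b j sg) sg = (\<Sum>j<N. P j * Delta l (b j) sg)"
  by (simp add: Delta_def)

lemma cmul_sum:
  "cmul Sm gam s \<alpha> (\<lambda>sg. \<Sum>j<N. P j * b j sg) sg = (\<Sum>j<N. P j * cmul Sm gam s \<alpha> (b j) sg)"
  by (simp add: cmul_def sum_distrib_left algebra_simps)

lemma Delta_sum': "Delta l (\<lambda>sg. \<Sum>j<N. P j * b j sg) = (\<lambda>sg. \<Sum>j<N. P j * Delta l (b j) sg)"
  by (simp add: Delta_sum fun_eq_iff)

definition GF :: "'v set \<Rightarrow> ('v, 'T::comm_ring_1) dsum set \<Rightarrow> nat \<Rightarrow> nat \<Rightarrow> (nat \<Rightarrow> ('v, 'T) dsum) \<Rightarrow> (nat \<Rightarrow> nat) \<Rightarrow> bool" where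
  "GF Sm M n N b dg \<longleftrightarrow>
      (\<forall>j<N. b j \<in> M \<and> (\<forall>sg. homog (b j sg) (dg j)) \<and> (\<forall>sg. \<not> sg \<subseteq> {..<n} \<longrightarrow> b j sg = 0))
    \<and> (\<forall>d. card {j. j < N \<and> dg j = d} = (if even d then n choose (d div 2) else 0))
    \<and> (\<forall>x\<in>M. \<exists>!p::nat \<Rightarrow> ('v, 'T) sym. (\<forall>j. p j \<in> SymAlg Sm) \<and> (\<forall>j\<ge>N. p j = 0)
                 \<and> x = (\<lambda>sg. \<Sum>j<N. p j * b j sg))"

lemma GF_base: "GF Sm (XT_rev Sm gam [] :: ('v::euclidean_space, 'T::comm_ring_1) dsum set) 0 1
   (\<lambda>j sg. if sg = {} then 1 else 0) (\<lambda>j. 0)"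
  unfolding GF_def
proof (intro conjI allI impI ballI)
  fix j :: nat assume "j < 1"
  show "(\<lambda>sg. if sg = {} then 1 else 0) \<in> (XT_rev Sm gam [] :: ('v, 'T) dsum set)"
    using one_SymAlg[of Sm] by (simp only: XT_rev.simps mem_Collect_eq) blast
  fix sg :: "nat set"
  show "homog (if sg = {} then (1::('v, 'T) sym) else 0) 0" by (simp add: homog_one homog_zero)
next
  fix j :: nat and sg :: "nat set" assume "j < 1" "\<not> sg \<subseteq> {..<0}"
  then show "(if sg = {} then (1::('v, 'T) sym) else 0) = 0" by auto
next
  fix d :: nat
  show "card {j::nat. j < 1 \<and> (0::nat) = d} = (if even d then 0 choose (d div 2) else 0)"
  proof (cases "d = 0")
    case True
    then have "{j::nat. j < 1 \<and> (0::nat) = d} = {0}" by auto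
    then show ?thesis using True by simp
  next
    case False
    then show ?thesis by (auto simp: elim!: evenE)
  qed
next
  fix x assume "x \<in> (XT_rev Sm gam [] :: ('v, 'T) dsum set)"
  then obtain p where p: "p \<in> SymAlg Sm" "x = (\<lambda>sg. if sg = {} then p else 0)" by auto
  let ?P = "\<lambda>j::nat. if j = 0 then p else 0"
  show "\<exists>!P::nat \<Rightarrow> ('v, 'T) sym. (\<forall>j. P j \<in> SymAlg Sm) \<and> (\<forall>j\<ge>1. P j = 0) \<and> x = (\<lambda>sg. \<Sum>j<1. P j * (if sg = {} then 1 else 0))"
  proof (rule ex1I[of _ ?P])
    show "(\<forall>j. ?P j \<in> SymAlg Sm) \<and> (\<forall>j\<ge>1. ?P j = 0) \<and> x = (\<lambda>sg. \<Sum>j<1. ?P j * (if sg = {} then 1 else 0))"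
      using p zero_SymAlg[of Sm] by (auto simp: fun_eq_iff)
  next
    fix P :: "nat \<Rightarrow> ('v, 'T) sym" assume h: "(\<forall>j. P j \<in> SymAlg Sm) \<and> (\<forall>j\<ge>1. P j = 0) \<and> x = (\<lambda>sg. \<Sum>j<1. P j * (if sg = {} then 1 else 0))"
    then have "x {} = P 0" by simp
    then have "P 0 = p" using p by simp
    then show "P = ?P" using h by (auto simp: fun_eq_iff)
  qed
qed

lemma card_step:
  fixes dg :: "nat \<Rightarrow> nat"
  assumes card: "\<forall>d. card {j. j < N \<and> dg j = d} = (if even d then n choose (d div 2) else 0)"
  shows "card {j. j < N + N \<and> (if j < N then dg j else dg (j - N) + 2) = d} =
         (if even d then Suc n choose (d div 2) else 0)"
proof -
  let ?dg' = "\<lambda>j. if j < N then dg j else dg (j - N) + 2"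
  have split: "{j. j < N + N \<and> ?dg' j = d} = {j. j < N \<and> dg j = d} \<union> (\<lambda>j. N + j) ` {j. j < N \<and> dg j + 2 = d}"
  proof (rule set_eqI, rule iffI)
    fix j assume "j \<in> {j. j < N + N \<and> ?dg' j = d}"
    then show "j \<in> {j. j < N \<and> dg j = d} \<union> (\<lambda>j. N + j) ` {j. j < N \<and> dg j + 2 = d}"
    proof (cases "j < N")
      case False
      then have "j = N + (j - N)" by simp
      then show ?thesis using False \<open>j \<in> _\<close> by (auto intro!: image_eqI[of j _ "j - N"])
    qed simp
  qed auto
  have disj: "{j. j < N \<and> dg j = d} \<inter> (\<lambda>j. N + j) ` {j. j < N \<and> dg j + 2 = d} = {}" by auto
  have "card {j. j < N + N \<and> ?dg' j = d} = card {j. j < N \<and> dg j = d} + card ((\<lambda>j. N + j) ` {j. j < N \<and> dg j + 2 = d})"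
    unfolding split by (rule card_Un_disjoint) (use disj in auto)
  also have "card ((\<lambda>j. N + j) ` {j. j < N \<and> dg j + 2 = d}) = card {j. j < N \<and> dg j + 2 = d}"
    by (rule card_image) (simp add: inj_on_def)
  finally have C: "card {j. j < N + N \<and> ?dg' j = d} = card {j. j < N \<and> dg j = d} + card {j. j < N \<and> dg j + 2 = d}" .
  show ?thesis
  proof (cases "d < 2")
    case True
    then have "{j. j < N \<and> dg j + 2 = d} = {}" by auto
    moreover have "d = 0 \<or> d = 1" using True by auto
    ultimately show ?thesis using C card[rule_format, of d] by auto
  next
    case False
    define e where "e = d - 2"
    have e: "d = e + 2" using False e_def by simp
    then have "{j. j < N \<and> dg j + 2 = d} = {j. j < N \<and> dg j = e}" by auto
    then have C2: "card {j. j < N + N \<and> ?dg' j = d} = card {j. j < N \<and> dg j = d} + card {j. j < N \<and> dg j = e}"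
      using C by simp
    show ?thesis
    proof (cases "even d")
      case True
      then have ev: "even e" using e by simp
      then obtain k where k: "e = 2 * k" by (rule evenE)
      then have "d div 2 = Suc k" "e div 2 = k" using e by auto
      then show ?thesis using C2 card[rule_format, of d] card[rule_format, of e] True ev by simp
    next
      case False
      then have "odd e" using e by simp
      then show ?thesis using C2 card[rule_format, of d] card[rule_format, of e] False by simp
    qed
  qed
qed

lemma GF_step:
  fixes Sm R :: "'v::euclidean_space set" and gam :: 'v
  assumes rs: "root_system R" "Sm \<subseteq> R" "gam \<in> R"
    and two: "\<forall>t::'T::idom. 2 * t = 0 \<longrightarrow> t = 0"
    and nz: "\<forall>a\<in>R. \<forall>k::int. tens Sm (a, k) \<noteq> (0::('v, 'T) sym)"
    and lab: "set (a # rs) \<subseteq> labels Sm"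
    and IH: "GF Sm (XT_rev Sm gam rs :: ('v, 'T) dsum set) (length rs) N b dg"
  shows "\<exists>N b dg. GF Sm (XT_rev Sm gam (a # rs) :: ('v, 'T) dsum set) (length (a # rs)) N b dg"
proof -
  define s where "s = rev rs @ [a]"
  define l where "l = length s"
  define M where "M = (XT_rev Sm gam rs :: ('v, 'T) dsum set)"
  define c where "c = (cmul Sm gam s (aroot gam a) :: ('v, 'T) dsum \<Rightarrow> ('v, 'T) dsum)"
  have sne: "s \<noteq> []" and sl: "set s \<subseteq> labels Sm" and lasts: "last s = a"
    and ls: "l = Suc (length rs)" using lab by (auto simp: s_def l_def)
  have XTeq: "XT_rev Sm gam (a # rs) = {addF x y | x y. x \<in> Delta l ` M \<and> y \<in> c ` Delta l ` M}"
    by (simp add: Let_def s_def l_def M_def c_def)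
  have bM: "\<And>j. j < N \<Longrightarrow> b j \<in> M" and bh: "\<And>j sg. j < N \<Longrightarrow> homog (b j sg) (dg j)"
    and bs: "\<And>j sg. j < N \<Longrightarrow> \<not> sg \<subseteq> {..<length rs} \<Longrightarrow> b j sg = 0"
    and card: "\<forall>d. card {j. j < N \<and> dg j = d} = (if even d then length rs choose (d div 2) else 0)"
    and rep: "\<And>x. x \<in> M \<Longrightarrow> \<exists>!p::nat \<Rightarrow> ('v, 'T) sym. (\<forall>j. p j \<in> SymAlg Sm) \<and> (\<forall>j\<ge>N. p j = 0)
                 \<and> x = (\<lambda>sg. \<Sum>j<N. p j * b j sg)"
    using IH unfolding GF_def M_def by blast+
  define b' where "b' = (\<lambda>j. if j < N then Delta l (b j) else c (Delta l (b (j - N))))"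
  define dg' where "dg' = (\<lambda>j. if j < N then dg j else dg (j - N) + 2)"
  have z0s: "(0::('v, 'T) sym) \<in> SymAlg Sm" by (rule zero_SymAlg)
  have z0: "(\<lambda>_. 0) \<in> M" unfolding M_def by (rule zero_in_XT)
  have Dz: "Delta l (\<lambda>_. 0) = (\<lambda>_. (0::('v, 'T) sym))" by (simp add: Delta_def fun_eq_iff)
  have cz: "c (\<lambda>_. 0) = (\<lambda>_. 0)" by (simp add: c_def cmul_def fun_eq_iff)
  have comb: "(\<lambda>sg. \<Sum>j<N + N. P j * b' j sg) =
     addF (Delta l (\<lambda>sg. \<Sum>j<N. P j * b j sg)) (c (Delta l (\<lambda>sg. \<Sum>j<N. P (N + j) * b j sg)))" for P
  proof -
    have c_sum: "c (\<lambda>sg. \<Sum>j<N. Q j * G j sg) sg = (\<Sum>j<N. Q j * c (G j) sg)" for Q G sg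
      unfolding c_def by (rule cmul_sum)
    show ?thesis
      unfolding Delta_sum' addF_def
      by (simp add: sum_split_add c_sum b'_def fun_eq_iff)
  qed
  have direct: "y g = y' g \<and> z g = z' g"
    if "addF (Delta l y) (c (Delta l z)) = addF (Delta l y') (c (Delta l z'))" "g \<subseteq> {..<length rs}"
    for y z y' z' :: "('v, 'T) dsum" and g
    using direct_comp[OF rs two nz sl sne, of y z y' z' g] that
    unfolding lasts c_def l_def by (simp add: s_def)
  have supp: "(\<lambda>sg. \<Sum>j<N. P j * b j sg) g = 0" if "\<not> g \<subseteq> {..<length rs}" for P g
    using bs that by simp
  show ?thesis
  proof (intro exI[of _ "N + N"] exI[of _ b'] exI[of _ dg'])
    show "GF Sm (XT_rev Sm gam (a # rs) :: ('v, 'T) dsum set) (length (a # rs)) (N + N) b' dg'"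
      unfolding GF_def
    proof (intro conjI allI impI ballI)
      fix j assume j: "j < N + N"
      show "b' j \<in> XT_rev Sm gam (a # rs)"
      proof (cases "j < N")
        case True
        have "b' j = addF (Delta l (b j)) (c (Delta l (\<lambda>_. 0)))"
          using True by (simp add: b'_def Dz cz addF_def)
        then show ?thesis unfolding XTeq using bM[OF True] z0 by blast
      next
        case False
        then have jN: "j - N < N" using j by simp
        have "b' j = addF (Delta l (\<lambda>_. 0)) (c (Delta l (b (j - N))))"
          using False by (simp add: b'_def Dz addF_def)
        then show ?thesis unfolding XTeq using bM[OF jN] z0 by blast
      qed
      fix sg
      show "homog (b' j sg) (dg' j)"
      proof (cases "j < N")
        case True
        then show ?thesis using bh[OF True] by (simp add: b'_def dg'_def Delta_def homog_zero)
      next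
        case False
        then have jN: "j - N < N" using j by simp
        have "homog (tens Sm (ev gam s sg (aroot gam a)) * Delta l (b (j - N)) sg) (2 + dg (j - N))"
          by (rule homog_mult[OF homog_lin[OF lin_tens]]) (simp add: Delta_def homog_zero bh[OF jN])
        then show ?thesis using False by (simp add: b'_def dg'_def c_def cmul_def add.commute)
      qed
    next
      fix j sg assume j: "j < N + N" and sg: "\<not> sg \<subseteq> {..<length (a # rs)}"
      then have "\<not> sg \<subseteq> {..<l}" using ls by simp
      then show "b' j sg = 0" by (simp add: b'_def c_def cmul_def Delta_def)
    next
      fix d
      show "card {j. j < N + N \<and> dg' j = d} = (if even d then length (a # rs) choose (d div 2) else 0)"
        using card_step[OF card, of d] by (simp add: dg'_def)
    next
      fix x :: "('v, 'T) dsum" assume "x \<in> XT_rev Sm gam (a # rs)"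
      then obtain y z where yz: "y \<in> M" "z \<in> M" "x = addF (Delta l y) (c (Delta l z))"
        unfolding XTeq by blast
      obtain p where p: "(\<forall>j. p j \<in> SymAlg Sm) \<and> (\<forall>j\<ge>N. p j = 0) \<and> y = (\<lambda>sg. \<Sum>j<N. p j * b j sg)"
        using rep[OF yz(1)] by blast
      obtain q where q: "(\<forall>j. q j \<in> SymAlg Sm) \<and> (\<forall>j\<ge>N. q j = 0) \<and> z = (\<lambda>sg. \<Sum>j<N. q j * b j sg)"
        using rep[OF yz(2)] by blast
      define R where "R = (\<lambda>j. if j < N then p j else if j < N + N then q (j - N) else 0)"
      have Ry: "(\<lambda>sg. \<Sum>j<N. R j * b j sg) = y" using p by (simp add: R_def)
      have Rz: "(\<lambda>sg. \<Sum>j<N. R (N + j) * b j sg) = z" using q by (simp add: R_def)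
      show "\<exists>!P::nat \<Rightarrow> ('v, 'T) sym. (\<forall>j. P j \<in> SymAlg Sm) \<and> (\<forall>j\<ge>N + N. P j = 0) \<and>
                 x = (\<lambda>sg. \<Sum>j<N + N. P j * b' j sg)"
      proof (rule ex1I[of _ R])
        show "(\<forall>j. R j \<in> SymAlg Sm) \<and> (\<forall>j\<ge>N + N. R j = 0) \<and> x = (\<lambda>sg. \<Sum>j<N + N. R j * b' j sg)"
          unfolding comb Ry Rz using yz(3) p q z0s by (simp add: R_def)
      next
        fix P :: "nat \<Rightarrow> ('v, 'T) sym"
        assume h: "(\<forall>j. P j \<in> SymAlg Sm) \<and> (\<forall>j\<ge>N + N. P j = 0) \<and> x = (\<lambda>sg. \<Sum>j<N + N. P j * b' j sg)"
        define y2 where "y2 = (\<lambda>sg. \<Sum>j<N. P j * b j sg)"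
        define z2 where "z2 = (\<lambda>sg. \<Sum>j<N. P (N + j) * b j sg)"
        have eq: "addF (Delta l y) (c (Delta l z)) = addF (Delta l y2) (c (Delta l z2))"
          using h yz(3) comb[of P] unfolding y2_def z2_def by simp
        have yy: "y = y2" and zz: "z = z2"
        proof -
          have "y g = y2 g \<and> z g = z2 g" for g
          proof (cases "g \<subseteq> {..<length rs}")
            case True then show ?thesis using direct[OF eq] by blast
          next
            case False
            then show ?thesis using supp[OF False] p q unfolding y2_def z2_def by simp
          qed
          then show "y = y2" "z = z2" by auto
        qed
        have P1: "(\<lambda>j. if j < N then P j else 0) = p"
        proof (rule ex1_same[OF rep[OF yz(1)]])
          show "(\<forall>j. (if j < N then P j else 0) \<in> SymAlg Sm) \<and> (\<forall>j\<ge>N. (if j < N then P j else 0) = 0) \<and>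
                 y = (\<lambda>sg. \<Sum>j<N. (if j < N then P j else 0) * b j sg)"
            using h z0s yy unfolding y2_def by simp
          show "(\<forall>j. p j \<in> SymAlg Sm) \<and> (\<forall>j\<ge>N. p j = 0) \<and> y = (\<lambda>sg. \<Sum>j<N. p j * b j sg)"
            using p .
        qed
        have P2: "(\<lambda>j. if j < N then P (N + j) else 0) = q"
        proof (rule ex1_same[OF rep[OF yz(2)]])
          show "(\<forall>j. (if j < N then P (N + j) else 0) \<in> SymAlg Sm) \<and> (\<forall>j\<ge>N. (if j < N then P (N + j) else 0) = 0) \<and>
                 z = (\<lambda>sg. \<Sum>j<N. (if j < N then P (N + j) else 0) * b j sg)"
            using h z0s zz unfolding z2_def by simp
          show "(\<forall>j. q j \<in> SymAlg Sm) \<and> (\<forall>j\<ge>N. q j = 0) \<and> z = (\<lambda>sg. \<Sum>j<N. q j * b j sg)"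
            using q .
        qed
        show "P = R"
        proof
          fix j
          show "P j = R j"
          proof (cases "j < N")
            case True then show ?thesis using fun_cong[OF P1, of j] by (simp add: R_def)
          next
            case False
            show ?thesis
            proof (cases "j < N + N")
              case True
              have jN: "j - N < N" and jj: "N + (j - N) = j" using False True by auto
              have "P (N + (j - N)) = q (j - N)" using fun_cong[OF P2, of "j - N"] jN by simp
              then have "P j = q (j - N)" by (simp only: jj)
              then show ?thesis using False True by (simp add: R_def)
            next
              case False2: False
              then show ?thesis using h False by (simp add: R_def)
            qed
          qed
        qed
      qed
    qed
  qed
qed

lemma GF_all:
  fixes Sm R :: "'v::euclidean_space set" and gam :: 'v
  assumes rs: "root_system R" "Sm \<subseteq> R" "gam \<in> R"
    and two: "\<forall>t::'T::idom. 2 * t = 0 \<longrightarrow> t = 0"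
    and nz: "\<forall>a\<in>R. \<forall>k::int. tens Sm (a, k) \<noteq> (0::('v, 'T) sym)"
  shows "set rs \<subseteq> labels Sm \<Longrightarrow> \<exists>N b dg. GF Sm (XT_rev Sm gam rs :: ('v, 'T) dsum set) (length rs) N b dg"
proof (induction rs)
  case Nil
  show ?case using GF_base by fastforce
next
  case (Cons a rs)
  then obtain N b dg where "GF Sm (XT_rev Sm gam rs :: ('v, 'T) dsum set) (length rs) N b dg" by auto
  then show ?case by (rule GF_step[OF rs two nz Cons.prems])
qed

lemma GF_graded: assumes "GF Sm M n N b dg" shows "graded_free Sm M n"
  unfolding graded_free_def
proof (intro exI[of _ N] exI[of _ b] exI[of _ dg] conjI)
  show "\<forall>j<N. b j \<in> M \<and> (\<forall>sg. homog (b j sg) (dg j))" using assms unfolding GF_def by simp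
  show "\<forall>d. card {j. j < N \<and> dg j = d} = (if even d then n choose (d div 2) else 0)"
    using assms unfolding GF_def by (elim conjE)
  show "\<forall>x\<in>M. \<exists>!p. (\<forall>j. p j \<in> SymAlg Sm) \<and> (\<forall>j\<ge>N. p j = 0) \<and> x = (\<lambda>sg. \<Sum>j<N. p j * b j sg)"
    using assms unfolding GF_def by (elim conjE)
qed

theorem lemma6p2:
  fixes R Sm :: "'v::euclidean_space set" and gam :: 'v
  assumes "root_system R" and "reduced_rs R" and "irreducible_rs R"
    and "is_base R Sm" and "highest_root R Sm gam"
    and "\<forall>t::'T::idom. 2 * t = 0 \<longrightarrow> t = 0"
    and "\<forall>a\<in>R. \<forall>k::int. tens Sm (a, k) \<noteq> (0 :: ('v, 'T) sym)"
  shows "(\<forall>s. set s \<subseteq> labels Sm \<longrightarrow> s \<noteq> [] \<longrightarrow>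
            (let l = length s; M = (XT Sm gam (butlast s) :: ('v, 'T) dsum set);
                 c = cmul Sm gam s (aroot gam (last s)) in
              XT Sm gam s = {addF x y | x y. x \<in> Delta l ` M \<and> y \<in> c ` Delta l ` M}
              \<and> (\<forall>x\<in>XT Sm gam s. \<exists>!yz. fst yz \<in> Delta l ` M \<and> snd yz \<in> c ` Delta l ` M
                                   \<and> x = addF (fst yz) (snd yz))))
       \<and> (\<forall>s. set s \<subseteq> labels Sm \<longrightarrow> graded_free Sm (XT Sm gam s :: ('v, 'T) dsum set) (length s))"
proof -
  have SmR: "Sm \<subseteq> R" using assms(4) by (simp add: is_base_def)
  have gR: "gam \<in> R" using assms(5) by (simp add: highest_root_def)
  note rs = assms(1) SmR gR
  have part1: "XT Sm gam s = {addF x y | x y. x \<in> Delta (length s) ` (XT Sm gam (butlast s) :: ('v, 'T) dsum set) \<and>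
                 y \<in> cmul Sm gam s (aroot gam (last s)) ` Delta (length s) ` XT Sm gam (butlast s)}
        \<and> (\<forall>x\<in>XT Sm gam s. \<exists>!yz. fst yz \<in> Delta (length s) ` (XT Sm gam (butlast s) :: ('v, 'T) dsum set)
               \<and> snd yz \<in> cmul Sm gam s (aroot gam (last s)) ` Delta (length s) ` XT Sm gam (butlast s)
               \<and> x = addF (fst yz) (snd yz))"
    if s: "set s \<subseteq> labels Sm" "s \<noteq> []" for s
  proof -
    let ?M = "XT Sm gam (butlast s) :: ('v, 'T) dsum set"
    let ?c = "cmul Sm gam s (aroot gam (last s)) :: ('v, 'T) dsum \<Rightarrow> ('v, 'T) dsum"
    have rv: "rev s = last s # rev (butlast s)" using s(2)
      by (metis append_butlast_last_id rev.simps(2) rev_rev_ident)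
    have bs: "butlast s @ [last s] = s" using s(2) by simp
    have ls: "Suc (length s - Suc 0) = length s" using s(2) by (cases s) auto
    have eq1: "XT Sm gam s = {addF x y | x y. x \<in> Delta (length s) ` ?M \<and> y \<in> ?c ` Delta (length s) ` ?M}"
      unfolding XT_def rv by (simp add: Let_def bs ls)
    show ?thesis
    proof (rule conjI[OF eq1], rule ballI)
      fix x :: "('v, 'T) dsum" assume "x \<in> XT Sm gam s"
      then obtain y z where yz: "y \<in> ?M" "z \<in> ?M" "x = addF (Delta (length s) y) (?c (Delta (length s) z))"
        unfolding eq1 by blast
      show "\<exists>!yz. fst yz \<in> Delta (length s) ` ?M \<and> snd yz \<in> ?c ` Delta (length s) ` ?M \<and> x = addF (fst yz) (snd yz)"
      proof (rule ex1I[of _ "(Delta (length s) y, ?c (Delta (length s) z))"])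
        show "fst (Delta (length s) y, ?c (Delta (length s) z)) \<in> Delta (length s) ` ?M \<and>
              snd (Delta (length s) y, ?c (Delta (length s) z)) \<in> ?c ` Delta (length s) ` ?M \<and>
              x = addF (fst (Delta (length s) y, ?c (Delta (length s) z))) (snd (Delta (length s) y, ?c (Delta (length s) z)))"
          using yz by auto
      next
        fix w :: "('v, 'T) dsum \<times> ('v, 'T) dsum" assume w: "fst w \<in> Delta (length s) ` ?M \<and> snd w \<in> ?c ` Delta (length s) ` ?M \<and> x = addF (fst w) (snd w)"
        then obtain y' z' where y'z': "fst w = Delta (length s) y'" "snd w = ?c (Delta (length s) z')" by blast
        have "addF (Delta (length s) y) (?c (Delta (length s) z)) = addF (Delta (length s) y') (?c (Delta (length s) z'))"
          using w yz(3) y'z' by simp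
        from direct_pairs[OF rs assms(6,7) s this]
        show "w = (Delta (length s) y, ?c (Delta (length s) z))"
          using y'z' by (simp add: prod_eq_iff)
      qed
    qed
  qed
  have part2: "graded_free Sm (XT Sm gam s :: ('v, 'T) dsum set) (length s)" if s: "set s \<subseteq> labels Sm" for s
  proof -
    have "set (rev s) \<subseteq> labels Sm" using s by simp
    from GF_all[OF rs assms(6,7) this] obtain N b dg where
      "GF Sm (XT_rev Sm gam (rev s) :: ('v, 'T) dsum set) (length (rev s)) N b dg" by blast
    then have "graded_free Sm (XT_rev Sm gam (rev s) :: ('v, 'T) dsum set) (length (rev s))" by (rule GF_graded)
    then show ?thesis unfolding XT_def length_rev .
  qed
  show ?thesis using part1 part2 by (simp add: Let_def)
qed

end
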